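(* Let $t\ge 2$. Every $\mathbb{F}_q$-linear set of pseudoregulus type of the projective line $\Lambda=PG(1,q^t)$ is mapped by some element of $PGL(2,q^t)$ onto the linear set $\{\langle(x,x^q)\rangle_{q^t}:x\in\mathbb{F}_{q^t}^*\}=\{\langle(1,a)\rangle_{q^t}: a\in\mathbb{F}_{q^t}^*,\ N_{q^t/q}(a)=1\}$. In particular all $\mathbb{F}_q$-linear sets of pseudoregulus type of $PG(1,q^t)$ are projectively equivalent.
   Context: Let $\Lambda=PG(V,\mathbb{F}_{q^t})=PG(1,q^t)$ with $V$ a 2-dimensional $\mathbb{F}_{q^t}$-space; $\langle\mathbf u\rangle_{q^t}$ denotes the point defined by $\mathbf u\ne\mathbf 0$. Definition: given two distinct points $P_1=\langle\mathbf w\rangle_{q^t}$, $P_2=\langle\mathbf v\rangle_{q^t}$ of $\Lambda$, an automorphism $\tau$ of $\mathbb{F}_{q^t}$ with $\mathrm{Fix}(\tau)=\mathbb{F}_q$, and $\rho\in\mathbb{F}_{q^t}^*$, the set $L_{\rho,\tau}=\{\langle\lambda\mathbf w+\rho\lambda^\tau\mathbf v\rangle_{q^t}:\lambda\in\mathbb{F}_{q^t}^*\}$ is called an $\mathbb{F}_q$-linear set of pseudoregulus type of $\Lambda$, with transversal points $P_1,P_2$. $N_{q^t/q}$ denotes the norm from $\mathbb{F}_{q^t}$ to $\mathbb{F}_q$, and coordinates are with respect to a fixed basis of $V$. *)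

theory Defs
  imports Main
begin

text \<open>Vectors of V = F_{q^t}^2 are pairs over a finite field 'a; CARD('a) = q^t.\<close>

definition smultv :: "'a::field \<Rightarrow> 'a \<times> 'a \<Rightarrow> 'a \<times> 'a" where
  "smultv c u = (c * fst u, c * snd u)"

definition addv :: "'a::field \<times> 'a \<Rightarrow> 'a \<times> 'a \<Rightarrow> 'a \<times> 'a" where
  "addv u w = (fst u + fst w, snd u + snd w)"

definition ppt :: "'a::field \<times> 'a \<Rightarrow> ('a \<times> 'a) set" where
  "ppt u = {smultv c u | c. c \<noteq> 0}"

definition subF :: "nat \<Rightarrow> 'a::field set" where
  "subF q = {x. x ^ q = x}"

definition field_aut :: "('a::field \<Rightarrow> 'a) \<Rightarrow> bool" where
  "field_aut f \<longleftrightarrow> bij f \<and> (\<forall>x y. f (x + y) = f x + f y) \<and>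
     (\<forall>x y. f (x * y) = f x * f y) \<and> f 1 = 1"

definition Fix :: "('a \<Rightarrow> 'a) \<Rightarrow> 'a set" where
  "Fix f = {x. f x = x}"

definition linset_pr :: "'a::field \<times> 'a \<Rightarrow> 'a \<times> 'a \<Rightarrow> 'a \<Rightarrow> ('a \<Rightarrow> 'a) \<Rightarrow> ('a \<times> 'a) set set" where
  "linset_pr w v \<rho> \<tau> = {ppt (addv (smultv l w) (smultv (\<rho> * \<tau> l) v)) | l. l \<noteq> 0}"

definition pseudoregulus :: "nat \<Rightarrow> ('a::field \<times> 'a) set set \<Rightarrow> bool" where
  "pseudoregulus q L \<longleftrightarrow> (\<exists>w v \<rho> \<tau>. w \<noteq> (0,0) \<and> v \<noteq> (0,0) \<and> ppt w \<noteq> ppt v \<and>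
      field_aut \<tau> \<and> Fix \<tau> = subF q \<and> \<rho> \<noteq> 0 \<and> L = linset_pr w v \<rho> \<tau>)"

text \<open>2x2 matrices (a,b,c,d) = [[a,b],[c,d]] acting on column vectors; PGL(2,q^t) elements
  are represented by invertible matrices.\<close>
type_synonym 'a mat2 = "'a \<times> 'a \<times> 'a \<times> 'a"

definition mat_app :: "'a::field mat2 \<Rightarrow> 'a \<times> 'a \<Rightarrow> 'a \<times> 'a" where
  "mat_app M u = (case M of (a, b, c, d) \<Rightarrow> (a * fst u + b * snd u, c * fst u + d * snd u))"

definition invertible2 :: "'a::field mat2 \<Rightarrow> bool" where
  "invertible2 M = (case M of (a, b, c, d) \<Rightarrow> a * d - b * c \<noteq> 0)"

definition pimage :: "'a::field mat2 \<Rightarrow> ('a \<times> 'a) set set \<Rightarrow> ('a \<times> 'a) set set" where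
  "pimage M L = {ppt (mat_app M u) | u. u \<noteq> (0,0) \<and> ppt u \<in> L}"

definition normF :: "nat \<Rightarrow> nat \<Rightarrow> 'a::field \<Rightarrow> 'a" where
  "normF q t a = (\<Prod>i<t. a ^ (q ^ i))"

end

theory Submission imports Defs "HOL-Computational_Algebra.Polynomial" begin

lemma roots_bound:
  fixes n :: nat assumes "n \<ge> 1"
  shows "card {x::'a::field. x ^ n = 1} \<le> n"
proof -
  define p :: "'a poly" where "p = monom 1 n - 1"
  have "p = monom 1 n + (- 1)" by (simp add: p_def)
  moreover have "degree (- 1 :: 'a poly) < degree (monom (1::'a) n)" using assms by (simp add: degree_monom_eq)
  ultimately have deg: "degree p = n" using degree_add_eq_left by (metis degree_monom_eq one_neq_zero)
  have pz: "p \<noteq> 0" using deg assms by auto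
  have "{x::'a. x ^ n = 1} = {x. poly p x = 0}" by (auto simp: p_def poly_monom)
  then show ?thesis using card_poly_roots_bound[OF pz] deg by simp
qed

lemma lagrange_mult:
  fixes H :: "'a::field set"
  assumes fin: "finite H" and nz: "0 \<notin> H" and h: "h \<in> H" and cl: "\<And>g. g \<in> H \<Longrightarrow> h * g \<in> H"
  shows "h ^ card H = 1"
proof -
  have h0: "h \<noteq> 0" using h nz by auto
  have inj: "inj_on ((*) h) H" using h0 by (auto simp: inj_on_def)
  have sub: "(*) h ` H \<subseteq> H" using cl by auto
  have eq: "(*) h ` H = H" using card_subset_eq[OF fin sub] card_image[OF inj] by simp
  have "prod id H = prod id ((*) h ` H)" using eq by simp
  also have "\<dots> = prod ((*) h) H" using prod.reindex[OF inj] by simp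
  also have "\<dots> = h ^ card H * prod id H" by (simp add: prod.distrib)
  finally have "prod id H * 1 = prod id H * h ^ card H" by (simp add: mult.commute)
  moreover have "prod id H \<noteq> 0" using fin nz by (auto simp: prod_zero_iff)
  ultimately show ?thesis by (metis mult_left_cancel)
qed

lemma hom_count:
  fixes f :: "'a::{field,finite} \<Rightarrow> 'a"
  assumes mul: "\<And>x y. x \<noteq> 0 \<Longrightarrow> y \<noteq> 0 \<Longrightarrow> f (x * y) = f x * f y"
    and nz: "\<And>x. x \<noteq> 0 \<Longrightarrow> f x \<noteq> 0"
  shows "card (UNIV - {0::'a}) = card (f ` (UNIV - {0})) * card {x. x \<noteq> 0 \<and> f x = 1}"
proof -
  let ?K = "{x. x \<noteq> 0 \<and> f x = 1}"
  let ?I = "f ` (UNIV - {0})"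
  let ?A = "\<lambda>y. {x. x \<noteq> 0 \<and> f x = y}"
  have U: "UNIV - {0} = \<Union> (?A ` ?I)" by auto
  have fib: "card (?A y) = card ?K" if "y \<in> ?I" for y
  proof -
    obtain x0 where x0: "x0 \<noteq> 0" "y = f x0" using \<open>y \<in> ?I\<close> by auto
    have "?A y = (*) x0 ` ?K"
    proof
      show "?A y \<subseteq> (*) x0 ` ?K"
      proof
        fix x assume "x \<in> ?A y"
        hence x: "x \<noteq> 0" "f x = y" by auto
        have "f x = f x0 * f (x / x0)" using mul[of x0 "x/x0"] x x0 by simp
        hence "f (x / x0) = 1" using x x0 nz[OF x0(1)] by (simp add: field_simps)
        moreover have "x = x0 * (x / x0)" using x0 by simp
        ultimately show "x \<in> (*) x0 ` ?K" using x x0 by (intro image_eqI[of _ _ "x/x0"]) auto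
      qed
      show "(*) x0 ` ?K \<subseteq> ?A y" using x0 mul by auto
    qed
    moreover have "inj_on ((*) x0) ?K" using x0 by (auto simp: inj_on_def)
    ultimately show ?thesis by (simp add: card_image)
  qed
  have "card (UNIV - {0::'a}) = card (\<Union> (?A ` ?I))" using U by simp
  also have "\<dots> = (\<Sum>y\<in>?I. card (?A y))" by (rule card_UN_disjoint) auto
  also have "\<dots> = (\<Sum>y\<in>?I. card ?K)" using fib by simp
  finally show ?thesis by simp
qed


lemma geom: "(q::nat) \<ge> 1 \<Longrightarrow> (\<Sum>i<t. q ^ i) * (q - 1) = q ^ t - 1"
proof (induction t)
  case 0 then show ?case by simp
next
  case (Suc t)
  have "(\<Sum>i<Suc t. q ^ i) * (q - 1) = (\<Sum>i<t. q ^ i) * (q - 1) + q ^ t * (q - 1)"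
    by (simp add: algebra_simps)
  also have "\<dots> = q ^ t - 1 + q ^ t * (q - 1)" using Suc by simp
  also have "\<dots> = q ^ Suc t - 1" using Suc.prems
    by (simp add: algebra_simps diff_mult_distrib2)
  finally show ?case .
qed

lemma images:
  fixes q t :: nat and \<tau> :: "'a::{field,finite} \<Rightarrow> 'a"
  assumes card: "card (UNIV :: 'a set) = q ^ t" and t1: "t \<ge> 1"
    and aut: "field_aut \<tau>" and hfix: "Fix \<tau> = subF q"
  shows "(\<lambda>x. x ^ (q - 1)) ` (UNIV - {0}) = {a::'a. a ^ (\<Sum>i<t. q ^ i) = 1}"
    and "(\<lambda>l. \<tau> l / l) ` (UNIV - {0}) = {a::'a. a ^ (\<Sum>i<t. q ^ i) = 1}"
    and "q \<ge> 2"
proof -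
  define S where "S = (\<Sum>i<t. q ^ i)"
  define N where "N = {a::'a. a ^ S = 1}"
  have q2: "q \<ge> 2"
  proof (rule ccontr)
    assume "\<not> q \<ge> 2"
    hence "q = 0 \<or> q = 1" by auto
    hence "card (UNIV :: 'a set) \<le> 1" using card t1 by (auto simp: zero_power)
    moreover have "card {0::'a, 1} \<le> card (UNIV :: 'a set)" by (rule card_mono) auto
    ultimately show False by simp
  qed
  then show "q \<ge> 2" .
  have "q ^ 0 \<le> S" unfolding S_def by (rule member_le_sum) (use t1 in auto)
  hence S1: "S \<ge> 1" by simp
  have cardF: "card (UNIV - {0::'a}) = q ^ t - 1" using card by (simp add: card_Diff_singleton)
  have SQ: "S * (q - 1) = q ^ t - 1" unfolding S_def using geom q2 by simp
  have fin: "finite (A :: 'a set)" for A by simp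
  have lagF: "x ^ (q ^ t - 1) = 1" if "x \<noteq> 0" for x :: 'a
    using lagrange_mult[of "UNIV - {0}" x] that cardF by auto
  define K where "K = {x::'a. x \<noteq> 0 \<and> x ^ (q - 1) = 1}"
  have Kbound: "card K \<le> q - 1"
  proof -
    have "card K \<le> card {x::'a. x ^ (q - 1) = 1}" unfolding K_def by (rule card_mono) auto
    also have "\<dots> \<le> q - 1" by (rule roots_bound) (use q2 in simp)
    finally show ?thesis .
  qed
  have Kpos: "card K \<ge> 1"
  proof -
    have "1 \<in> K" unfolding K_def by simp
    then have "K \<noteq> {}" by auto
    then show ?thesis by (simp add: Suc_le_eq card_gt_0_iff)
  qed
  have qpow: "x * x ^ (q - 1) = x ^ q" for x :: 'a
    using q2 by (cases q) auto
  let ?s = "\<lambda>x::'a. x ^ (q - 1)"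
  have hs: "card (UNIV - {0::'a}) = card (?s ` (UNIV - {0})) * card {x. x \<noteq> 0 \<and> ?s x = 1}"
    by (rule hom_count) (auto simp: power_mult_distrib)
  hence hs': "q ^ t - 1 = card (?s ` (UNIV - {0})) * card K" using cardF unfolding K_def by simp
  have sN: "?s ` (UNIV - {0}) \<subseteq> N"
  proof
    fix a assume "a \<in> ?s ` (UNIV - {0})"
    then obtain x where x: "x \<noteq> 0" "a = x ^ (q - 1)" by auto
    have "a ^ S = x ^ ((q - 1) * S)" using x by (simp add: power_mult)
    also have "\<dots> = 1" using lagF[OF x(1)] SQ by (simp add: mult.commute)
    finally show "a \<in> N" unfolding N_def by simp
  qed
  have cN: "card N \<le> S" unfolding N_def using roots_bound[OF S1] by simp
  have "S * (q - 1) \<le> card (?s ` (UNIV - {0})) * (q - 1)"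
    using hs' SQ mult_le_mono2[OF Kbound, of "card (?s ` (UNIV - {0}))"] by simp
  hence "S \<le> card (?s ` (UNIV - {0}))" using q2 by simp
  moreover have "card (?s ` (UNIV - {0})) \<le> card N" by (rule card_mono[OF fin sN])
  ultimately have "card (?s ` (UNIV - {0})) = card N" using cN by simp
  hence sEq: "?s ` (UNIV - {0}) = N" using card_subset_eq[OF fin sN] by simp
  then show "?s ` (UNIV - {0}) = {a::'a. a ^ S = 1}" unfolding N_def .
  have cardSig: "card (?s ` (UNIV - {0})) = S" using sEq cN \<open>S \<le> card (?s ` (UNIV - {0}))\<close>
    by simp
  have bij: "bij \<tau>" and add: "\<And>x y. \<tau> (x + y) = \<tau> x + \<tau> y"
    and mul: "\<And>x y. \<tau> (x * y) = \<tau> x * \<tau> y" using aut unfolding field_aut_def by auto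
  have t0: "\<tau> 0 = 0"
  proof -
    have "\<tau> 0 + \<tau> 0 = \<tau> 0 + 0" using add[of 0 0] by simp
    then show ?thesis by (simp only: add_left_cancel)
  qed
  have tnz: "\<tau> x \<noteq> 0" if "x \<noteq> 0" for x
    using bij t0 that unfolding bij_def inj_def by metis
  let ?f = "\<lambda>l::'a. \<tau> l / l"
  have hf: "card (UNIV - {0::'a}) = card (?f ` (UNIV - {0})) * card {x. x \<noteq> 0 \<and> ?f x = 1}"
    by (rule hom_count) (auto simp: mul tnz)
  have kf: "{x. x \<noteq> 0 \<and> ?f x = 1} = K"
  proof -
    have "?f x = 1 \<longleftrightarrow> x ^ (q - 1) = 1" if "x \<noteq> 0" for x
    proof -
      have "?f x = 1 \<longleftrightarrow> \<tau> x = x" using that by (simp add: divide_eq_1_iff)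
      also have "\<dots> \<longleftrightarrow> x ^ q = x" using hfix unfolding Fix_def subF_def by blast
      also have "\<dots> \<longleftrightarrow> x * x ^ (q - 1) = x * 1" using qpow by simp
      also have "\<dots> \<longleftrightarrow> x ^ (q - 1) = 1" using that by simp
      finally show ?thesis .
    qed
    then show ?thesis unfolding K_def by auto
  qed
  have "card (?f ` (UNIV - {0})) * card K = card (?s ` (UNIV - {0})) * card K"
    using hf hs' cardF kf by simp
  hence cardf: "card (?f ` (UNIV - {0})) = S" using Kpos cardSig by auto
  have fN: "?f ` (UNIV - {0}) \<subseteq> N"
  proof
    fix h assume h: "h \<in> ?f ` (UNIV - {0})"
    have "h ^ card (?f ` (UNIV - {0})) = 1"
    proof (rule lagrange_mult)
      show "finite (?f ` (UNIV - {0}))" by simp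
      show "0 \<notin> ?f ` (UNIV - {0})"
      proof
        assume "0 \<in> ?f ` (UNIV - {0})"
        then obtain x where x: "x \<noteq> 0" "0 = \<tau> x / x" by blast
        then show False using tnz[OF x(1)] by simp
      qed
      show "h \<in> ?f ` (UNIV - {0})" by fact
      fix g assume "g \<in> ?f ` (UNIV - {0})"
      then obtain b where b: "b \<noteq> 0" "g = ?f b" by blast
      obtain a where a: "a \<noteq> 0" "h = ?f a" using h by blast
      have hg: "h * g = ?f (a * b)" using a b by (simp add: mul)
      have "a * b \<in> UNIV - {0}" using a b by simp
      then show "h * g \<in> ?f ` (UNIV - {0})" using hg by (rule rev_image_eqI)
    qed
    then show "h \<in> N" unfolding N_def using cardf by simp
  qed
  have "card (?f ` (UNIV - {0})) \<le> card N" by (rule card_mono[OF fin fN])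
  hence "card (?f ` (UNIV - {0})) = card N" using cardf cN by simp
  hence "?f ` (UNIV - {0}) = N" using card_subset_eq[OF fin fN] by simp
  then show "?f ` (UNIV - {0}) = {a::'a. a ^ S = 1}" unfolding N_def .
qed

lemma images_s:
  fixes q t :: nat
  assumes card: "card (UNIV :: 'a set) = q ^ t" and t1: "t \<ge> 1"
  shows "(\<lambda>x. x ^ (q - 1)) ` (UNIV - {0}) = {a::'a::{field,finite}. a ^ (\<Sum>i<t. q ^ i) = 1}"
    and "q \<ge> 2"
proof -
  define S where "S = (\<Sum>i<t. q ^ i)"
  define N where "N = {a::'a. a ^ S = 1}"
  have q2: "q \<ge> 2"
  proof (rule ccontr)
    assume "\<not> q \<ge> 2"
    hence "q = 0 \<or> q = 1" by auto
    hence "card (UNIV :: 'a set) \<le> 1" using card t1 by (auto simp: zero_power)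
    moreover have "card {0::'a, 1} \<le> card (UNIV :: 'a set)" by (rule card_mono) auto
    ultimately show False by simp
  qed
  then show "q \<ge> 2" .
  have "q ^ 0 \<le> S" unfolding S_def by (rule member_le_sum) (use t1 in auto)
  hence S1: "S \<ge> 1" by simp
  have cardF: "card (UNIV - {0::'a}) = q ^ t - 1" using card by (simp add: card_Diff_singleton)
  have SQ: "S * (q - 1) = q ^ t - 1" unfolding S_def using geom q2 by simp
  have fin: "finite (A :: 'a set)" for A by simp
  have lagF: "x ^ (q ^ t - 1) = 1" if "x \<noteq> 0" for x :: 'a
    using lagrange_mult[of "UNIV - {0}" x] that cardF by auto
  define K where "K = {x::'a. x \<noteq> 0 \<and> x ^ (q - 1) = 1}"
  have Kbound: "card K \<le> q - 1"
  proof -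
    have "card K \<le> card {x::'a. x ^ (q - 1) = 1}" unfolding K_def by (rule card_mono) auto
    also have "\<dots> \<le> q - 1" by (rule roots_bound) (use q2 in simp)
    finally show ?thesis .
  qed
  have Kpos: "card K \<ge> 1"
  proof -
    have "1 \<in> K" unfolding K_def by simp
    then have "K \<noteq> {}" by auto
    then show ?thesis by (simp add: Suc_le_eq card_gt_0_iff)
  qed
  have qpow: "x * x ^ (q - 1) = x ^ q" for x :: 'a
    using q2 by (cases q) auto
  let ?s = "\<lambda>x::'a. x ^ (q - 1)"
  have hs: "card (UNIV - {0::'a}) = card (?s ` (UNIV - {0})) * card {x. x \<noteq> 0 \<and> ?s x = 1}"
    by (rule hom_count) (auto simp: power_mult_distrib)
  hence hs': "q ^ t - 1 = card (?s ` (UNIV - {0})) * card K" using cardF unfolding K_def by simp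
  have sN: "?s ` (UNIV - {0}) \<subseteq> N"
  proof
    fix a assume "a \<in> ?s ` (UNIV - {0})"
    then obtain x where x: "x \<noteq> 0" "a = x ^ (q - 1)" by auto
    have "a ^ S = x ^ ((q - 1) * S)" using x by (simp add: power_mult)
    also have "\<dots> = 1" using lagF[OF x(1)] SQ by (simp add: mult.commute)
    finally show "a \<in> N" unfolding N_def by simp
  qed
  have cN: "card N \<le> S" unfolding N_def using roots_bound[OF S1] by simp
  have "S * (q - 1) \<le> card (?s ` (UNIV - {0})) * (q - 1)"
    using hs' SQ mult_le_mono2[OF Kbound, of "card (?s ` (UNIV - {0}))"] by simp
  hence "S \<le> card (?s ` (UNIV - {0}))" using q2 by simp
  moreover have "card (?s ` (UNIV - {0})) \<le> card N" by (rule card_mono[OF fin sN])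
  ultimately have "card (?s ` (UNIV - {0})) = card N" using cN by simp
  hence sEq: "?s ` (UNIV - {0}) = N" using card_subset_eq[OF fin sN] by simp
  then show "?s ` (UNIV - {0}) = {a::'a. a ^ S = 1}" unfolding N_def .
  have cardSig: "card (?s ` (UNIV - {0})) = S" using sEq cN \<open>S \<le> card (?s ` (UNIV - {0}))\<close>
    by simp
qed


lemma ppt_smult: "(c::'a::field) \<noteq> 0 \<Longrightarrow> ppt (smultv c z) = ppt z"
proof -
  assume c: "c \<noteq> 0"
  show ?thesis
  proof
    show "ppt (smultv c z) \<subseteq> ppt z"
    proof
      fix y assume "y \<in> ppt (smultv c z)"
      then obtain d where d: "d \<noteq> 0" "y = smultv d (smultv c z)" unfolding ppt_def by blast
      have "y = smultv (d * c) z" using d by (simp add: smultv_def)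
      moreover have "d * c \<noteq> 0" using d c by simp
      ultimately show "y \<in> ppt z" unfolding ppt_def by blast
    qed
    show "ppt z \<subseteq> ppt (smultv c z)"
    proof
      fix y assume "y \<in> ppt z"
      then obtain d where d: "d \<noteq> 0" "y = smultv d z" unfolding ppt_def by blast
      have "y = smultv (d / c) (smultv c z)" using d c by (simp add: smultv_def)
      moreover have "d / c \<noteq> 0" using d c by simp
      ultimately show "y \<in> ppt (smultv c z)" unfolding ppt_def by blast
    qed
  qed
qed

lemma ppt_self: "(z::'a::field \<times> 'a) \<in> ppt z"
  unfolding ppt_def by (rule CollectI, rule exI[of _ 1]) (simp add: smultv_def)

lemma ppt_eqD: "ppt (u::'a::field \<times> 'a) = ppt z \<Longrightarrow> \<exists>c. c \<noteq> 0 \<and> u = smultv c z"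
  using ppt_self[of u] unfolding ppt_def by blast

definition mmul :: "'a::field mat2 \<Rightarrow> 'a mat2 \<Rightarrow> 'a mat2" where
  "mmul M N = (case M of (a, b, c, d) \<Rightarrow> case N of (e, f, g, h) \<Rightarrow>
      (a * e + b * g, a * f + b * h, c * e + d * g, c * f + d * h))"

definition minv :: "'a::field mat2 \<Rightarrow> 'a mat2" where
  "minv M = (case M of (a, b, c, d) \<Rightarrow> let D = a * d - b * c in (d / D, - b / D, - c / D, a / D))"

lemma mat_app_mul: "mat_app (mmul M N) u = mat_app M (mat_app N u)"
  by (cases M; cases N; cases u) (simp add: mmul_def mat_app_def algebra_simps)

lemma mat_app_smult: "mat_app M (smultv c u) = smultv c (mat_app M u)"
  by (cases M; cases u) (simp add: smultv_def mat_app_def algebra_simps)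

lemma lin_div: "(x::'a::field) / D * p + y / D * r = (x * p + y * r) / D"
  by (simp add: add_divide_distrib)

lemma det_div: "(x::'a::field) / D * (y / E) - u / D * (w / E) = (x * y - u * w) / (D * E)"
  by (simp add: diff_divide_distrib)

lemma minv_app: "invertible2 M \<Longrightarrow> mat_app (minv M) (mat_app M u) = u"
proof (cases M; cases u)
  fix a b c d x y
  assume i: "invertible2 M" and Md: "M = (a, b, c, d)" and ud: "u = (x, y)"
  define D where "D = a * d - b * c"
  have D: "D \<noteq> 0" using i Md by (simp add: invertible2_def D_def)
  have e1: "d / D * (a * x + b * y) + - b / D * (c * x + d * y) = x"
  proof -
    have "d * (a * x + b * y) + - b * (c * x + d * y) = D * x"
      unfolding D_def by (simp add: algebra_simps)
    then have "d / D * (a * x + b * y) + - b / D * (c * x + d * y) = (D * x) / D"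
      by (simp only: lin_div)
    then show ?thesis using D by simp
  qed
  have e2: "- c / D * (a * x + b * y) + a / D * (c * x + d * y) = y"
  proof -
    have "- c * (a * x + b * y) + a * (c * x + d * y) = D * y"
      unfolding D_def by (simp add: algebra_simps)
    then have "- c / D * (a * x + b * y) + a / D * (c * x + d * y) = (D * y) / D"
      by (simp only: lin_div)
    then show ?thesis using D by simp
  qed
  show ?thesis using e1 e2 unfolding Md ud minv_def mat_app_def Let_def D_def by simp
qed

lemma inv_minv: "invertible2 M \<Longrightarrow> invertible2 (minv M)"
proof (cases M)
  case (fields a b c d)
  assume i: "invertible2 M"
  hence D: "a * d - b * c \<noteq> 0" using fields by (simp add: invertible2_def)
  define E where "E = a * d - b * c"
  have E: "E \<noteq> 0" using D E_def by simp
  have "d / E * (a / E) - - b / E * (- c / E) = (d * a - - b * - c) / (E * E)"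
    by (rule det_div)
  also have "\<dots> = E / (E * E)" unfolding E_def by (simp add: algebra_simps)
  finally have "d / E * (a / E) - - b / E * (- c / E) \<noteq> 0" using E by simp
  then show ?thesis using fields unfolding invertible2_def minv_def Let_def E_def[symmetric]
    by (simp add: mult.commute)
qed

lemma inv_mul: "invertible2 M \<Longrightarrow> invertible2 N \<Longrightarrow> invertible2 (mmul M N)"
proof (cases M; cases N)
  fix a b c d e f g h
  assume "invertible2 M" "invertible2 N" "M = (a, b, c, d)" "N = (e, f, g, h)"
  moreover have "(a * e + b * g) * (c * f + d * h) - (a * f + b * h) * (c * e + d * g)
     = (a * d - b * c) * (e * h - f * g)" by (simp add: algebra_simps)
  ultimately have "(a * e + b * g) * (c * f + d * h) - (a * f + b * h) * (c * e + d * g) \<noteq> 0"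
    by (simp add: invertible2_def)
  then show ?thesis using \<open>M = (a, b, c, d)\<close> \<open>N = (e, f, g, h)\<close>
    unfolding invertible2_def mmul_def by simp
qed

lemma mat_app_nz: "invertible2 M \<Longrightarrow> u \<noteq> (0, 0) \<Longrightarrow> mat_app M u \<noteq> (0, 0)"
  using minv_app[of M u] by (cases M) (auto simp: mat_app_def)

lemma pimage_comp:
  assumes N: "invertible2 N"
  shows "pimage M (pimage N X) = pimage (mmul M N) X"
proof
  show "pimage M (pimage N X) \<subseteq> pimage (mmul M N) X"
  proof
    fix P assume "P \<in> pimage M (pimage N X)"
    then obtain u' where u': "u' \<noteq> (0,0)" "ppt u' \<in> pimage N X" "P = ppt (mat_app M u')"
      unfolding pimage_def by blast
    then obtain u where u: "u \<noteq> (0,0)" "ppt u \<in> X" "ppt u' = ppt (mat_app N u)"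
      unfolding pimage_def by blast
    obtain c where c: "c \<noteq> 0" "u' = smultv c (mat_app N u)" using ppt_eqD[OF u(3)] by blast
    have "P = ppt (mat_app (mmul M N) u)" using u'(3) c
      by (simp add: mat_app_smult mat_app_mul ppt_smult)
    then show "P \<in> pimage (mmul M N) X" using u unfolding pimage_def by blast
  qed
  show "pimage (mmul M N) X \<subseteq> pimage M (pimage N X)"
  proof
    fix P assume "P \<in> pimage (mmul M N) X"
    then obtain u where u: "u \<noteq> (0,0)" "ppt u \<in> X" "P = ppt (mat_app (mmul M N) u)"
      unfolding pimage_def by blast
    have nz: "mat_app N u \<noteq> (0,0)" using mat_app_nz[OF N u(1)] .
    have "ppt (mat_app N u) \<in> pimage N X" using u unfolding pimage_def by blast
    moreover have "P = ppt (mat_app M (mat_app N u))" using u(3) by (simp add: mat_app_mul)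
    ultimately show "P \<in> pimage M (pimage N X)" using nz unfolding pimage_def by blast
  qed
qed

lemma pimage_id:
  assumes "\<And>u. mat_app M u = u" and "\<forall>P\<in>X. \<exists>u. u \<noteq> (0,0) \<and> P = ppt u"
  shows "pimage M X = X"
  using assms unfolding pimage_def by fastforce

lemma part1:
  fixes q t :: nat and \<tau> :: "'a::{field,finite} \<Rightarrow> 'a"
  assumes card: "card (UNIV :: 'a set) = q ^ t" and t1: "t \<ge> 1"
    and w: "w \<noteq> (0,0)" and v: "v \<noteq> (0,0)" and wv: "ppt w \<noteq> ppt v"
    and aut: "field_aut \<tau>" and hfix: "Fix \<tau> = subF q" and \<rho>: "\<rho> \<noteq> 0"
  shows "\<exists>M. invertible2 M \<and> pimage M (linset_pr w v \<rho> \<tau>) = {ppt (1, a) | a::'a. a ^ (\<Sum>i<t. q ^ i) = 1}"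
    and "\<forall>P\<in>linset_pr w v \<rho> \<tau>. \<exists>u. u \<noteq> (0,0) \<and> P = ppt u"
proof -
  obtain w1 w2 where wd: "w = (w1, w2)" by (cases w)
  obtain v1 v2 where vd: "v = (v1, v2)" by (cases v)
  define D where "D = w1 * v2 - w2 * v1"
  have D: "D \<noteq> 0"
  proof
    assume D0: "D = 0"
    have "\<exists>c. c \<noteq> 0 \<and> v = smultv c w"
    proof (cases "w1 = 0")
      case False
      have "v1 \<noteq> 0"
      proof
        assume "v1 = 0"
        hence "v2 = 0" using D0 False unfolding D_def by simp
        then show False using v vd \<open>v1 = 0\<close> by simp
      qed
      then show ?thesis using False D0 unfolding D_def wd vd smultv_def
        by (intro exI[of _ "v1 / w1"]) (auto simp: field_simps)
    next
      case True
      hence w2: "w2 \<noteq> 0" using w wd by simp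
      have v1: "v1 = 0" using D0 True w2 unfolding D_def by simp
      hence "v2 \<noteq> 0" using v vd by simp
      then show ?thesis using True w2 v1 unfolding wd vd smultv_def
        by (intro exI[of _ "v2 / w2"]) (auto simp: field_simps)
    qed
    then obtain c where "c \<noteq> 0" "v = smultv c w" by blast
    hence "ppt v = ppt w" using ppt_smult by metis
    then show False using wv by simp
  qed
  define M where "M = (v2 / D, - v1 / D, - w2 / (\<rho> * D), w1 / (\<rho> * D))"
  define z where "z = (\<lambda>l. addv (smultv l w) (smultv (\<rho> * \<tau> l) v))"
  have Mz: "mat_app M (z l) = (l, \<tau> l)" for l
  proof -
    have n1: "v2 * (l * w1 + \<rho> * \<tau> l * v1) + - v1 * (l * w2 + \<rho> * \<tau> l * v2) = D * l"
      unfolding D_def by (simp add: algebra_simps)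
    have n2: "- w2 * (l * w1 + \<rho> * \<tau> l * v1) + w1 * (l * w2 + \<rho> * \<tau> l * v2) = (\<rho> * D) * \<tau> l"
      unfolding D_def by (simp add: algebra_simps)
    have c1: "v2 / D * (l * w1 + \<rho> * \<tau> l * v1) + - v1 / D * (l * w2 + \<rho> * \<tau> l * v2) = l"
    proof -
      have "v2 / D * (l * w1 + \<rho> * \<tau> l * v1) + - v1 / D * (l * w2 + \<rho> * \<tau> l * v2)
         = (v2 * (l * w1 + \<rho> * \<tau> l * v1) + - v1 * (l * w2 + \<rho> * \<tau> l * v2)) / D" by (rule lin_div)
      also have "\<dots> = (D * l) / D" by (simp only: n1)
      also have "\<dots> = l" using D by simp
      finally show ?thesis .
    qed
    have c2: "- w2 / (\<rho> * D) * (l * w1 + \<rho> * \<tau> l * v1) + w1 / (\<rho> * D) * (l * w2 + \<rho> * \<tau> l * v2) = \<tau> l"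
    proof -
      have "- w2 / (\<rho> * D) * (l * w1 + \<rho> * \<tau> l * v1) + w1 / (\<rho> * D) * (l * w2 + \<rho> * \<tau> l * v2)
         = (- w2 * (l * w1 + \<rho> * \<tau> l * v1) + w1 * (l * w2 + \<rho> * \<tau> l * v2)) / (\<rho> * D)" by (rule lin_div)
      also have "\<dots> = ((\<rho> * D) * \<tau> l) / (\<rho> * D)" by (simp only: n2)
      also have "\<dots> = \<tau> l" using D \<rho> by simp
      finally show ?thesis .
    qed
    show ?thesis unfolding M_def z_def wd vd mat_app_def addv_def smultv_def
      using c1 c2 by simp
  qed
  have invM: "invertible2 M"
  proof -
    have "v2 / D * (w1 / (\<rho> * D)) - - v1 / D * (- w2 / (\<rho> * D)) = (v2 * w1 - - v1 * - w2) / (D * (\<rho> * D))"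
      by (rule det_div)
    also have "\<dots> = D / (D * (\<rho> * D))" unfolding D_def by (simp add: algebra_simps)
    finally have "v2 / D * (w1 / (\<rho> * D)) - - v1 / D * (- w2 / (\<rho> * D)) \<noteq> 0" using D \<rho> by simp
    then show ?thesis unfolding invertible2_def M_def by simp
  qed
  have add: "\<And>x y. \<tau> (x + y) = \<tau> x + \<tau> y" and bij: "bij \<tau>"
    using aut unfolding field_aut_def by auto
  have t0: "\<tau> 0 = 0"
  proof -
    have "\<tau> 0 + \<tau> 0 = \<tau> 0 + 0" using add[of 0 0] by simp
    then show ?thesis by (simp only: add_left_cancel)
  qed
  have znz: "z l \<noteq> (0,0)" if "l \<noteq> 0" for l
  proof
    assume "z l = (0,0)"
    hence "mat_app M (z l) = (0,0)" by (simp add: mat_app_def)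
    then show False using Mz[of l] that by simp
  qed
  have L: "linset_pr w v \<rho> \<tau> = {ppt (z l) | l. l \<noteq> 0}" unfolding linset_pr_def z_def by simp
  show "\<forall>P\<in>linset_pr w v \<rho> \<tau>. \<exists>u. u \<noteq> (0,0) \<and> P = ppt u" using L znz by blast
  have img: "(\<lambda>l. \<tau> l / l) ` (UNIV - {0}) = {a::'a. a ^ (\<Sum>i<t. q ^ i) = 1}"
    using images(2)[OF card t1 aut hfix] .
  have pl: "ppt (l, \<tau> l) = ppt (1, \<tau> l / l)" if "l \<noteq> 0" for l
  proof -
    have "(l, \<tau> l) = smultv l (1, \<tau> l / l)" using that by (simp add: smultv_def)
    then show ?thesis using ppt_smult[OF that] by simp
  qed
  have "pimage M (linset_pr w v \<rho> \<tau>) = {ppt (1, a) | a::'a. a ^ (\<Sum>i<t. q ^ i) = 1}"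
  proof
    show "pimage M (linset_pr w v \<rho> \<tau>) \<subseteq> {ppt (1, a) | a::'a. a ^ (\<Sum>i<t. q ^ i) = 1}"
    proof
      fix P assume "P \<in> pimage M (linset_pr w v \<rho> \<tau>)"
      then obtain u where u: "u \<noteq> (0,0)" "ppt u \<in> linset_pr w v \<rho> \<tau>" "P = ppt (mat_app M u)"
        unfolding pimage_def by blast
      then obtain l where l: "l \<noteq> 0" "ppt u = ppt (z l)" using L by blast
      obtain c where c: "c \<noteq> 0" "u = smultv c (z l)" using ppt_eqD[OF l(2)] by blast
      have "P = ppt (1, \<tau> l / l)" using u(3) c l(1) Mz[of l] pl[OF l(1)]
        by (simp add: mat_app_smult ppt_smult)
      moreover have "\<tau> l / l \<in> {a::'a. a ^ (\<Sum>i<t. q ^ i) = 1}" using img l(1) by blast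
      ultimately show "P \<in> {ppt (1, a) | a::'a. a ^ (\<Sum>i<t. q ^ i) = 1}" by blast
    qed
    show "{ppt (1, a) | a::'a. a ^ (\<Sum>i<t. q ^ i) = 1} \<subseteq> pimage M (linset_pr w v \<rho> \<tau>)"
    proof
      fix P assume "P \<in> {ppt (1, a) | a::'a. a ^ (\<Sum>i<t. q ^ i) = 1}"
      then obtain a where a: "P = ppt (1, a)" "a ^ (\<Sum>i<t. q ^ i) = 1" by blast
      have "a \<in> (\<lambda>l. \<tau> l / l) ` (UNIV - {0})" using img a(2) by simp
      then obtain l where l: "l \<noteq> 0" "a = \<tau> l / l" by blast
      have "P = ppt (mat_app M (z l))" using a l Mz[of l] pl[OF l(1)] by simp
      moreover have "ppt (z l) \<in> linset_pr w v \<rho> \<tau>" using L l by blast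
      ultimately show "P \<in> pimage M (linset_pr w v \<rho> \<tau>)" using znz[OF l(1)]
        unfolding pimage_def by blast
    qed
  qed
  then show "\<exists>M. invertible2 M \<and> pimage M (linset_pr w v \<rho> \<tau>) = {ppt (1, a) | a::'a. a ^ (\<Sum>i<t. q ^ i) = 1}"
    using invM by blast
qed

theorem mainTheorem10:
  fixes q t :: nat
  assumes card: "card (UNIV :: 'a::{field,finite} set) = q ^ t" and t2: "t \<ge> 2"
  shows "(\<forall>L :: ('a \<times> 'a) set set. pseudoregulus q L \<longrightarrow>
            (\<exists>M. invertible2 M \<and> pimage M L = {ppt (x, x ^ q) | x. x \<noteq> 0}))
       \<and> {ppt (x, x ^ q) | x :: 'a. x \<noteq> 0} = {ppt (1, a) | a :: 'a. a \<noteq> 0 \<and> normF q t a = 1}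
       \<and> (\<forall>L1 L2 :: ('a \<times> 'a) set set. pseudoregulus q L1 \<and> pseudoregulus q L2 \<longrightarrow>
            (\<exists>M. invertible2 M \<and> pimage M L1 = L2))"
proof -
  have t1: "t \<ge> 1" using t2 by simp
  define S where "S = (\<Sum>i<t. q ^ i)"
  define T where "T = {ppt (1, a) | a::'a. a ^ S = 1}"
  have q2: "q \<ge> 2" using images_s(2)[OF card t1] .
  have sig: "(\<lambda>x::'a. x ^ (q - 1)) ` (UNIV - {0}) = {a::'a. a ^ S = 1}"
    using images_s(1)[OF card t1] unfolding S_def .
  have "q ^ 0 \<le> S" unfolding S_def by (rule member_le_sum) (use t1 in auto)
  hence S1: "S \<ge> 1" by simp
  have P1: "(\<exists>M. invertible2 M \<and> pimage M L = T) \<and> (\<forall>P\<in>L. \<exists>u. u \<noteq> (0,0) \<and> P = ppt u)"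
    if ps: "pseudoregulus q L" for L :: "('a \<times> 'a) set set"
  proof -
    obtain w v \<rho> \<tau> where d: "w \<noteq> (0,0)" "v \<noteq> (0,0)" "ppt w \<noteq> ppt v" "field_aut \<tau>"
      "Fix \<tau> = subF q" "\<rho> \<noteq> 0" "L = linset_pr w v \<rho> \<tau>"
      using ps unfolding pseudoregulus_def by blast
    show ?thesis using part1[OF card t1 d(1-6)] d(7) unfolding T_def S_def by blast
  qed
  have T2: "{ppt (x, x ^ q) | x :: 'a. x \<noteq> 0} = T"
  proof -
    have e: "ppt (x, x ^ q) = ppt (1, x ^ (q - 1))" if "x \<noteq> 0" for x :: 'a
    proof -
      have "(x, x ^ q) = smultv x (1, x ^ (q - 1))" using q2
        by (cases q) (auto simp: smultv_def)
      then show ?thesis using ppt_smult[OF that] by simp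
    qed
    have "{ppt (x, x ^ q) | x :: 'a. x \<noteq> 0} = {ppt (1, x ^ (q - 1)) | x :: 'a. x \<noteq> 0}"
      using e by blast
    also have "\<dots> = T" unfolding T_def
    proof (intro set_eqI iffI)
      fix P assume "P \<in> {ppt (1, x ^ (q - 1)) | x :: 'a. x \<noteq> 0}"
      then obtain x :: 'a where "x \<noteq> 0" "P = ppt (1, x ^ (q - 1))" by blast
      moreover have "x ^ (q - 1) \<in> {a::'a. a ^ S = 1}" using sig \<open>x \<noteq> 0\<close> by blast
      ultimately show "P \<in> {ppt (1, a) | a::'a. a ^ S = 1}" by blast
    next
      fix P assume "P \<in> {ppt (1, a) | a::'a. a ^ S = 1}"
      then obtain a :: 'a where a: "a ^ S = 1" "P = ppt (1, a)" by blast
      hence "a \<in> (\<lambda>x::'a. x ^ (q - 1)) ` (UNIV - {0})" using sig by simp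
      then obtain x where "x \<noteq> 0" "a = x ^ (q - 1)" by blast
      then show "P \<in> {ppt (1, x ^ (q - 1)) | x :: 'a. x \<noteq> 0}" using a by blast
    qed
    finally show ?thesis .
  qed
  have T3: "{ppt (1, a) | a :: 'a. a \<noteq> 0 \<and> normF q t a = 1} = T"
  proof -
    have "normF q t a = a ^ S" for a :: 'a unfolding normF_def S_def by (simp add: power_sum)
    moreover have "a ^ S = 1 \<Longrightarrow> a \<noteq> 0" for a :: 'a using S1 by (cases S) auto
    ultimately show ?thesis unfolding T_def by metis
  qed
  have part3: "\<exists>M. invertible2 M \<and> pimage M L1 = L2"
    if ps12: "pseudoregulus q L1" "pseudoregulus q L2" for L1 L2 :: "('a \<times> 'a) set set"
  proof -
    obtain M1 where M1: "invertible2 M1" "pimage M1 L1 = T" using P1[OF ps12(1)] by blast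
    obtain M2 where M2: "invertible2 M2" "pimage M2 L2 = T" using P1[OF ps12(2)] by blast
    have L2n: "\<forall>P\<in>L2. \<exists>u. u \<noteq> (0,0) \<and> P = ppt u" using P1[OF ps12(2)] by blast
    have "pimage (mmul (minv M2) M1) L1 = pimage (minv M2) (pimage M1 L1)"
      using pimage_comp[OF M1(1)] by simp
    also have "\<dots> = pimage (minv M2) (pimage M2 L2)" using M1 M2 by simp
    also have "\<dots> = pimage (mmul (minv M2) M2) L2" using pimage_comp[OF M2(1)] by simp
    also have "\<dots> = L2"
      by (rule pimage_id) (use minv_app[OF M2(1)] L2n in \<open>auto simp: mat_app_mul\<close>)
    finally show ?thesis using inv_mul[OF inv_minv[OF M2(1)] M1(1)] by blast
  qed
  show ?thesis using P1 T2 T3 part3 by auto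
qed


end
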